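(* Let $J$ be a januarial of general type $((h_1,g_1),(h_2,g_2))$, embedded in a closed orientable surface of genus $g$, and let $\alpha=v-e$, where $v$ is the number of vertices and $e$ the number of edges of the common graph $\Upsilon$ of $J$. Then $$g=g_1+g_2+\frac{h_1+h_2+\alpha}{2}-1.$$
   Context: Let $\Delta(2,k,\ell)=\langle x,y : x^2=y^k=(xy)^\ell=1\rangle$ with $k,\ell\in\mathbb{Z}_{\ge 2}\cup\{\infty\}$, acting on a finite set $S$. The coset graph $\Gamma$ of this action is defined as follows. Its vertices are the elements of $S$. Two vertices transposed by $x$ are joined by an undirected $x$-edge, and points fixed by $x$ carry no $x$-edge. There is a directed $y$-edge from $u$ to $u y$. $\Gamma$ is $2$-cell embedded in a closed orientable surface using the rotation system that cyclically orders, at each vertex, its incoming $y$-edge, its outgoing $y$-edge and its $x$-edge. The faces of this embedding have boundary labels $y^n$ with $n\mid k$ (called $y$-faces) or $(xy)^m$ with $m\mid\ell$ (called $xy$-faces). The embedded graph is the coset diagram. A januarial $J$ is the coset diagram of such an action in which $\langle xy\rangle$ has exactly two orbits, each of size $|S|/2$; so $J$ has exactly two $xy$-faces. The genus of $J$ is the genus of this surface. Let $S_1,S_2$ be the closures of the two $xy$-faces (discs). Collapsing every $y$-face to a point gives the companion graph $\Gamma'$ and the companion diagram $J'$; let $S_i'$ be the images of $S_i$. Let $R_i$ be a small closed neighbourhood of $S_i'$ in $J'$. Then $R_i$ is a compact surface with boundary; let $g_i$ be its genus and $h_i$ the number of boundary components of $R_i$. The common graph is $\Upsilon=S_1'\cap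 S_2'$. $J$ is of simple type if $\Upsilon$ is a union of $h$ pairwise disjoint simple circuits; in that case $h_1=h_2=h$ and the type is written $(h,g_1,g_2)$. Otherwise $J$ is of general type, written $((h_1,g_1),(h_2,g_2))$. *)

theory Defs
  imports Complex_Main "HOL-Library.Extended_Nat" "HOL-Combinatorics.Permutations"
begin

(* Right action: u.x.y = y (x u), so the
   element xy acts as the function y o x.  k, l in {2,3,...} u {infinity}. *)
definition delta_action :: "enat \<Rightarrow> enat \<Rightarrow> 'a set \<Rightarrow> ('a \<Rightarrow> 'a) \<Rightarrow> ('a \<Rightarrow> 'a) \<Rightarrow> bool" where
  "delta_action k l S x y \<longleftrightarrow>
     finite S \<and> x permutes S \<and> y permutes S \<and>
     2 \<le> k \<and> 2 \<le> l \<and>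
     (\<forall>u\<in>S. x (x u) = u) \<and>
     (k \<noteq> \<infinity> \<longrightarrow> (\<forall>u\<in>S. (y ^^ the_enat k) u = u)) \<and>
     (l \<noteq> \<infinity> \<longrightarrow> (\<forall>u\<in>S. ((y \<circ> x) ^^ the_enat l) u = u))"

definition transitive_action :: "'a set \<Rightarrow> ('a \<Rightarrow> 'a) \<Rightarrow> ('a \<Rightarrow> 'a) \<Rightarrow> bool" where
  "transitive_action S x y \<longleftrightarrow>
     (\<forall>u\<in>S. \<forall>v\<in>S. (u, v) \<in> ({(a, x a) | a. a \<in> S} \<union> {(a, y a) | a. a \<in> S})\<^sup>*)"

definition orb :: "('a \<Rightarrow> 'a) \<Rightarrow> 'a \<Rightarrow> 'a set" where
  "orb p u = range (\<lambda>n. (p ^^ n) u)"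

definition orbits :: "'a set \<Rightarrow> ('a \<Rightarrow> 'a) \<Rightarrow> 'a set set" where
  "orbits S p = orb p ` S"

(* januarial: <xy> has exactly two orbits O1, O2, each of size |S|/2;
   O1, O2 are the point sets of the two xy-faces S_1, S_2 *)
definition januarial :: "'a set \<Rightarrow> ('a \<Rightarrow> 'a) \<Rightarrow> ('a \<Rightarrow> 'a) \<Rightarrow> 'a set \<Rightarrow> 'a set \<Rightarrow> bool" where
  "januarial S x y O1 O2 \<longleftrightarrow>
     orbits S (y \<circ> x) = {O1, O2} \<and> O1 \<noteq> O2 \<and>
     2 * card O1 = card S \<and> 2 * card O2 = card S"

definition x_edges :: "'a set \<Rightarrow> ('a \<Rightarrow> 'a) \<Rightarrow> 'a set set" where
  "x_edges S x = {{u, x u} | u. u \<in> S \<and> x u \<noteq> u}"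

(* Euler characteristic V - E + F of the coset diagram:
   |S| vertices, |S| directed y-edges plus the x-edges,
   faces = y-faces (<y>-orbits) and xy-faces (<xy>-orbits) *)
definition coset_euler_char :: "'a set \<Rightarrow> ('a \<Rightarrow> 'a) \<Rightarrow> ('a \<Rightarrow> 'a) \<Rightarrow> int" where
  "coset_euler_char S x y =
     int (card S) - int (card S + card (x_edges S x))
     + int (card (orbits S y) + card (orbits S (y \<circ> x)))"

definition is_surface_genus :: "'a set \<Rightarrow> ('a \<Rightarrow> 'a) \<Rightarrow> ('a \<Rightarrow> 'a) \<Rightarrow> nat \<Rightarrow> bool" where
  "is_surface_genus S x y g \<longleftrightarrow> coset_euler_char S x y = 2 - 2 * int g"

(* Companion diagram J': vertices = <y>-orbits (collapsed y-faces), edges = x-edges,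
   faces = the xy-faces.  The closure S_i' of the face with point set Oi: *)
definition face_vertices :: "('a \<Rightarrow> 'a) \<Rightarrow> 'a set \<Rightarrow> 'a set set" where
  "face_vertices y Oi = orb y ` Oi"

definition face_edges :: "('a \<Rightarrow> 'a) \<Rightarrow> 'a set \<Rightarrow> 'a set set" where
  "face_edges x Oi = {{u, x u} | u. u \<in> Oi \<and> x u \<noteq> u}"

(* The neighbourhood R_i of S_i' is the ribbon neighbourhood of the boundary graph
   of face i (darts = half-edges of the edges of S_i', with the rotation induced from
   J') with the disc of face i glued to one of its boundary curves. *)
definition sub_darts :: "'a set \<Rightarrow> ('a \<Rightarrow> 'a) \<Rightarrow> 'a set \<Rightarrow> 'a set" where
  "sub_darts S x Oi = {u \<in> S. x u \<noteq> u \<and> (u \<in> Oi \<or> x u \<in> Oi)}"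

(* induced rotation at a vertex: next dart of D in the cyclic order given by y *)
definition sub_rot :: "('a \<Rightarrow> 'a) \<Rightarrow> 'a set \<Rightarrow> 'a \<Rightarrow> 'a" where
  "sub_rot y D w = (y ^^ (LEAST j. 0 < j \<and> (y ^^ j) w \<in> D)) w"

definition sub_face_perm :: "('a \<Rightarrow> 'a) \<Rightarrow> ('a \<Rightarrow> 'a) \<Rightarrow> 'a set \<Rightarrow> 'a \<Rightarrow> 'a" where
  "sub_face_perm x y D u = sub_rot y D (x u)"

definition nbhd_boundary_walks :: "'a set \<Rightarrow> ('a \<Rightarrow> 'a) \<Rightarrow> ('a \<Rightarrow> 'a) \<Rightarrow> 'a set \<Rightarrow> 'a set set" where
  "nbhd_boundary_walks S x y Oi =
     orbits (sub_darts S x Oi) (sub_face_perm x y (sub_darts S x Oi))"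

(* h_i = number of boundary components of R_i (one boundary curve is capped by face i) *)
definition R_boundary_count :: "'a set \<Rightarrow> ('a \<Rightarrow> 'a) \<Rightarrow> ('a \<Rightarrow> 'a) \<Rightarrow> 'a set \<Rightarrow> nat" where
  "R_boundary_count S x y Oi = card (nbhd_boundary_walks S x y Oi) - 1"

(* g_i = genus of R_i: genus of the closed surface obtained by capping every boundary
   curve of the ribbon neighbourhood by a disc (V - E + F = 2 - 2 g_i) *)
definition is_R_genus :: "'a set \<Rightarrow> ('a \<Rightarrow> 'a) \<Rightarrow> ('a \<Rightarrow> 'a) \<Rightarrow> 'a set \<Rightarrow> nat \<Rightarrow> bool" where
  "is_R_genus S x y Oi gi \<longleftrightarrow>
     int (card (face_vertices y Oi)) - int (card (face_edges x Oi))
       + int (card (nbhd_boundary_walks S x y Oi)) = 2 - 2 * int gi"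

definition common_vertices :: "('a \<Rightarrow> 'a) \<Rightarrow> 'a set \<Rightarrow> 'a set \<Rightarrow> 'a set set" where
  "common_vertices y O1 O2 = face_vertices y O1 \<inter> face_vertices y O2"

definition common_edges :: "('a \<Rightarrow> 'a) \<Rightarrow> 'a set \<Rightarrow> 'a set \<Rightarrow> 'a set set" where
  "common_edges x O1 O2 = face_edges x O1 \<inter> face_edges x O2"

definition common_alpha :: "('a \<Rightarrow> 'a) \<Rightarrow> ('a \<Rightarrow> 'a) \<Rightarrow> 'a set \<Rightarrow> 'a set \<Rightarrow> int" where
  "common_alpha x y O1 O2 =
     int (card (common_vertices y O1 O2)) - int (card (common_edges x O1 O2))"

(* a simple circuit of Upsilon: distinct vertices v_0..v_{n-1}, distinct edges
   e_0..e_{n-1}, n >= 1, e_j joining v_j and v_{j+1 mod n}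
   (an edge {u, x u} joins the <y>-orbits of u and x u) *)
definition simple_circuit :: "('a \<Rightarrow> 'a) \<Rightarrow> ('a \<Rightarrow> 'a) \<Rightarrow> 'a set \<Rightarrow> 'a set \<Rightarrow>
    'a set list \<times> 'a set list \<Rightarrow> bool" where
  "simple_circuit x y O1 O2 c \<longleftrightarrow>
     (let vs = fst c; es = snd c; n = length vs in
       0 < n \<and> length es = n \<and> distinct vs \<and> distinct es \<and>
       set vs \<subseteq> common_vertices y O1 O2 \<and> set es \<subseteq> common_edges x O1 O2 \<and>
       (\<forall>j<n. orb y ` (es ! j) = {vs ! j, vs ! ((j + 1) mod n)}))"

definition simple_type :: "('a \<Rightarrow> 'a) \<Rightarrow> ('a \<Rightarrow> 'a) \<Rightarrow> 'a set \<Rightarrow> 'a set \<Rightarrow> bool" where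
  "simple_type x y O1 O2 \<longleftrightarrow>
     (\<exists>C. finite C \<and> (\<forall>c\<in>C. simple_circuit x y O1 O2 c) \<and>
        (\<forall>c\<in>C. \<forall>c'\<in>C. c \<noteq> c' \<longrightarrow> set (fst c) \<inter> set (fst c') = {}) \<and>
        (\<Union>c\<in>C. set (fst c)) = common_vertices y O1 O2 \<and>
        (\<Union>c\<in>C. set (snd c)) = common_edges x O1 O2)"

end

theory Submission
  imports Defs
begin

lemma funpow_in: "p permutes S \<Longrightarrow> u \<in> S \<Longrightarrow> (p ^^ n) u \<in> S"
  by (induction n) (auto simp: permutes_in_image)

lemma jan_sym: "januarial S x y O1 O2 \<Longrightarrow> januarial S x y O2 O1"
  unfolding januarial_def by (auto simp: insert_commute)

lemma orb_sub:
  assumes "delta_action k l S x y" "januarial S x y O1 O2"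
  shows "O1 \<subseteq> S" "\<exists>u0\<in>S. O1 = orb (y \<circ> x) u0"
proof -
  have p: "(y \<circ> x) permutes S" using assms(1) unfolding delta_action_def
    by (auto intro: permutes_compose)
  have "O1 \<in> orbits S (y \<circ> x)" using assms(2) unfolding januarial_def by auto
  then obtain u0 where u0: "u0 \<in> S" "O1 = orb (y \<circ> x) u0" unfolding orbits_def by auto
  then show "\<exists>u0\<in>S. O1 = orb (y \<circ> x) u0" by blast
  show "O1 \<subseteq> S" using u0 funpow_in[OF p] unfolding orb_def by auto
qed

lemma S_union:
  assumes "delta_action k l S x y" "januarial S x y O1 O2"
  shows "S = O1 \<union> O2"
proof
  show "O1 \<union> O2 \<subseteq> S" using orb_sub[OF assms] orb_sub[OF assms(1) jan_sym[OF assms(2)]] by auto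
  show "S \<subseteq> O1 \<union> O2"
  proof
    fix u assume "u \<in> S"
    then have "orb (y \<circ> x) u \<in> {O1, O2}" using assms(2) unfolding januarial_def orbits_def by auto
    moreover have "u \<in> orb (y \<circ> x) u" unfolding orb_def
      by (metis funpow_0 rangeI)
    ultimately show "u \<in> O1 \<union> O2" by auto
  qed
qed

lemma darts_nonempty:
  assumes d: "delta_action k l S x y" and t: "transitive_action S x y"
    and j: "januarial S x y O1 O2"
  shows "\<exists>u\<in>O1. x u \<noteq> u"
proof (rule ccontr)
  assume "\<not> ?thesis"
  then have fx: "\<And>u. u \<in> O1 \<Longrightarrow> x u = u" by auto
  obtain u0 where u0: "u0 \<in> S" "O1 = orb (y \<circ> x) u0" using orb_sub(2)[OF d j] by blast
  have closed: "\<And>u. u \<in> O1 \<Longrightarrow> (y \<circ> x) u \<in> O1"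
  proof -
    fix u assume "u \<in> O1"
    then obtain n where "u = ((y \<circ> x) ^^ n) u0" using u0 unfolding orb_def by auto
    then have "(y \<circ> x) u = ((y \<circ> x) ^^ Suc n) u0" by simp
    then show "(y \<circ> x) u \<in> O1" using u0 unfolding orb_def by (metis rangeI)
  qed
  let ?R = "{(a, x a) | a. a \<in> S} \<union> {(a, y a) | a. a \<in> S}"
  have stay: "(a, b) \<in> ?R\<^sup>* \<Longrightarrow> a \<in> O1 \<Longrightarrow> b \<in> O1" for a b
  proof (induction rule: rtrancl_induct)
    case base then show ?case by simp
  next
    case (step b c)
    then have "b \<in> O1" by simp
    from step(2) have "c = x b \<or> c = y b" by blast
    then show ?case using fx[OF \<open>b \<in> O1\<close>] closed[OF \<open>b \<in> O1\<close>] \<open>b \<in> O1\<close> by auto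
  qed
  have fS: "finite S" using d unfolding delta_action_def by auto
  have "S \<noteq> {}" using j unfolding januarial_def orbits_def by auto
  then have "card S > 0" using fS by auto
  then have "card O1 < card S" using j unfolding januarial_def by auto
  then have "S \<noteq> O1" by auto
  then obtain v where v: "v \<in> S" "v \<notin> O1" using orb_sub(1)[OF d j] by blast
  have "u0 \<in> O1" using u0 unfolding orb_def by (metis funpow_0 rangeI)
  then have "(u0, v) \<in> ?R\<^sup>*" using t u0 v unfolding transitive_action_def by auto
  then have "v \<in> O1" using stay \<open>u0 \<in> O1\<close> by blast
  with v show False by simp
qed

lemma walks_pos:
  assumes d: "delta_action k l S x y" and t: "transitive_action S x y"
    and j: "januarial S x y O1 O2"
  shows "card (nbhd_boundary_walks S x y O1) \<ge> 1"
proof -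
  have fS: "finite S" using d unfolding delta_action_def by auto
  obtain u where u: "u \<in> O1" "x u \<noteq> u" using darts_nonempty[OF d t j] by blast
  have "u \<in> sub_darts S x O1" using u orb_sub(1)[OF d j] unfolding sub_darts_def by auto
  moreover have "finite (sub_darts S x O1)" using fS unfolding sub_darts_def by auto
  ultimately show ?thesis
  proof -
    let ?D = "sub_darts S x O1"
    have "orb (sub_face_perm x y ?D) u \<in> orb (sub_face_perm x y ?D) ` ?D" using \<open>u \<in> ?D\<close> by blast
    then have "orb (sub_face_perm x y ?D) ` ?D \<noteq> {}" by blast
    moreover have "finite (orb (sub_face_perm x y ?D) ` ?D)" using \<open>finite ?D\<close> by blast
    ultimately show ?thesis unfolding nbhd_boundary_walks_def orbits_def
      by (simp add: Suc_leI card_gt_0_iff)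
  qed
qed

lemma face_edges_eq: "face_edges x O1 = (\<lambda>u. {u, x u}) ` {u \<in> O1. x u \<noteq> u}"
  unfolding face_edges_def by auto

theorem lemma5:
  fixes S :: "'a set" and x y :: "'a \<Rightarrow> 'a" and k l :: enat
    and O1 O2 :: "'a set" and g g1 g2 h1 h2 :: nat
  assumes "delta_action k l S x y"
    and "transitive_action S x y"
    and "januarial S x y O1 O2"
    and "\<not> simple_type x y O1 O2"
    and "is_surface_genus S x y g"
    and "is_R_genus S x y O1 g1" and "h1 = R_boundary_count S x y O1"
    and "is_R_genus S x y O2 g2" and "h2 = R_boundary_count S x y O2"
  shows "real g = real g1 + real g2
           + (real h1 + real h2 + real_of_int (common_alpha x y O1 O2)) / 2 - 1"
proof -
  note d = assms(1) and t = assms(2) and j = assms(3)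
  have fS: "finite S" using d unfolding delta_action_def by auto
  have SU: "S = O1 \<union> O2" using S_union[OF d j] .
  have f1: "finite O1" "finite O2" using fS SU by (auto intro: finite_subset)
  have fv: "finite (face_vertices y O1)" "finite (face_vertices y O2)"
    using f1 unfolding face_vertices_def by auto
  have fe: "finite (face_edges x O1)" "finite (face_edges x O2)"
    using f1 unfolding face_edges_eq by auto
  have vU: "face_vertices y O1 \<union> face_vertices y O2 = orbits S y"
    unfolding face_vertices_def orbits_def SU by (simp add: image_Un)
  have eU: "face_edges x O1 \<union> face_edges x O2 = x_edges S x"
    unfolding face_edges_def x_edges_def SU by blast
  have cv: "card (face_vertices y O1) + card (face_vertices y O2)
      = card (orbits S y) + card (common_vertices y O1 O2)"
    using card_Un_Int[OF fv] vU unfolding common_vertices_def by simp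
  have ce: "card (face_edges x O1) + card (face_edges x O2)
      = card (x_edges S x) + card (common_edges x O1 O2)"
    using card_Un_Int[OF fe] eU unfolding common_edges_def by simp
  have two: "card (orbits S (y \<circ> x)) = 2" using j unfolding januarial_def by auto
  have b1: "card (nbhd_boundary_walks S x y O1) \<ge> 1" using walks_pos[OF d t j] .
  have b2: "card (nbhd_boundary_walks S x y O2) \<ge> 1" using walks_pos[OF d t jan_sym[OF j]] .
  have H1: "int h1 = int (card (nbhd_boundary_walks S x y O1)) - 1"
    using assms(7) b1 unfolding R_boundary_count_def by auto
  have H2: "int h2 = int (card (nbhd_boundary_walks S x y O2)) - 1"
    using assms(9) b2 unfolding R_boundary_count_def by auto
  have G: "int (card (orbits S y)) - int (card (x_edges S x)) + 2 = 2 - 2 * int g"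
    using assms(5) two unfolding is_surface_genus_def coset_euler_char_def by simp
  have "2 * int g = 2 * int g1 + 2 * int g2 + int h1 + int h2 + common_alpha x y O1 O2 - 2"
    using G H1 H2 assms(6,8) cv ce unfolding is_R_genus_def common_alpha_def by linarith
  then have "real_of_int (2 * int g) = real_of_int (2 * int g1 + 2 * int g2 + int h1 + int h2 + common_alpha x y O1 O2 - 2)"
    by (rule arg_cong)
  then show ?thesis by (simp add: field_simps)
qed

end
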